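(* Let $a<b$ and let $f:[a,b]\to\mathbb{R}$ be continuous. Define $$I_f(a,x)=\frac{1}{x-a}\int_a^x f(t)\,\mathrm{d}t\ (a<x\le b),\quad B_f(a,b)=\frac{b-a}{2}\,I_f(a,b),\quad J_f(a,b)=b\,I_f(a,b)-\frac{1}{b-a}\int_a^b t\,f(t)\,\mathrm{d}t.$$ Then there exists $\eta\in(a,b)$ such that $$f(\eta)=I_f(a,\eta)+\frac{6\,[B_f(a,b)-J_f(a,b)]}{(b-a)^2}(\eta-a).$$ *)

theory Defs
  imports "HOL-Analysis.Analysis"
begin

definition int_mean :: "(real \<Rightarrow> real) \<Rightarrow> real \<Rightarrow> real \<Rightarrow> real" where
  "int_mean f a x = (1 / (x - a)) * integral {a..x} f"

definition B_f :: "(real \<Rightarrow> real) \<Rightarrow> real \<Rightarrow> real \<Rightarrow> real" where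
  "B_f f a b = ((b - a) / 2) * int_mean f a b"

definition J_f :: "(real \<Rightarrow> real) \<Rightarrow> real \<Rightarrow> real \<Rightarrow> real" where
  "J_f f a b = b * int_mean f a b - (1 / (b - a)) * integral {a..b} (\<lambda>t. t * f t)"

end

theory Submission
  imports Defs
begin

lemma aux1: "(d::real) \<noteq> 0 \<Longrightarrow> 6 * K / d^2 * d^3 / 3 = 2 * K * d"
  by (simp add: divide_simps power2_eq_square power3_eq_cube)

lemma aux2: "(b::real) \<noteq> a \<Longrightarrow> 2 * (F / 2 - b * F / (b - a) + H / (b - a)) * (b - a) = -(a + b) * F + 2 * H"
  by (simp add: divide_simps) (simp add: algebra_simps)

theorem mainTheorem8:
  fixes f :: "real \<Rightarrow> real" and a b :: real
  assumes "a < b" and "continuous_on {a..b} f"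
  shows "\<exists>\<eta>\<in>{a<..<b}. f \<eta> = int_mean f a \<eta>
           + (6 * (B_f f a b - J_f f a b) / (b - a)^2) * (\<eta> - a)"
proof -
  define F where "F x = integral {a..x} f" for x
  define H where "H x = integral {a..x} (\<lambda>t. t * f t)" for x
  define C where "C = 6 * (B_f f a b - J_f f a b) / (b - a)^2"
  define \<phi> where "\<phi> x = - (x + a) * F x + 2 * H x - C * (x - a)^3 / 3" for x
  define D where "D x = (x - a) * f x - F x - C * (x - a)^2" for x
  have ctf: "continuous_on {a..b} (\<lambda>t. t * f t)"
    using assms(2) by (intro continuous_intros) auto
  have dF: "(F has_real_derivative f x) (at x within {a..b})" if "x \<in> {a..b}" for x
    unfolding F_def using integral_has_real_derivative[OF assms(2) that] .
  have dH: "(H has_real_derivative x * f x) (at x within {a..b})" if "x \<in> {a..b}" for x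
    unfolding H_def using integral_has_real_derivative[OF ctf that] .
  have dphi: "(\<phi> has_real_derivative D x) (at x within {a..b})" if "x \<in> {a..b}" for x
    unfolding \<phi>_def[abs_def] D_def
    by (rule derivative_eq_intros dF[OF that] dH[OF that] refl | simp add: algebra_simps power2_eq_square)+ (simp add: field_simps)
  have cont: "continuous_on {a..b} \<phi>"
    by (rule DERIV_continuous_on[OF dphi])
  have Fa: "F a = 0" "H a = 0" unfolding F_def H_def by auto
  have "\<phi> a = 0" unfolding \<phi>_def using Fa by simp
  moreover have "\<phi> b = 0"
  proof -
    have "B_f f a b - J_f f a b = F b / 2 - b * F b / (b - a) + H b / (b - a)"
    proof -
      have ne: "b - a \<noteq> 0" using assms(1) by simp
      show ?thesis
        unfolding B_f_def J_f_def int_mean_def F_def[symmetric] H_def[symmetric]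
      proof -
        have e1: "(b - a) / 2 * (1 / (b - a) * F b) = F b / 2" using ne by (simp add: divide_simps)
        have e2: "b * (1 / (b - a) * F b) = b * F b / (b - a)" by simp
        have e3: "1 / (b - a) * H b = H b / (b - a)" by simp
        show "(b - a) / 2 * (1 / (b - a) * F b) - (b * (1 / (b - a) * F b) - 1 / (b - a) * H b) =
            F b / 2 - b * F b / (b - a) + H b / (b - a)"
          unfolding e1 e2 e3 by simp
      qed
    qed
    moreover have "C * (b - a)^3 / 3 = 2 * (B_f f a b - J_f f a b) * (b - a)"
      unfolding C_def using assms(1) by (intro aux1) simp
    ultimately have "C * (b - a)^3 / 3 = 2 * (F b / 2 - b * F b / (b - a) + H b / (b - a)) * (b - a)"
      by simp
    also have "\<dots> = -(a + b) * F b + 2 * H b"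
      using assms(1) by (intro aux2) simp
    finally have "C * (b - a)^3 / 3 = -(a + b) * F b + 2 * H b" .
    thus ?thesis unfolding \<phi>_def by (simp add: algebra_simps)
  qed
  ultimately have eq: "\<phi> a = \<phi> b" by simp
  have "\<exists>z. a < z \<and> z < b \<and> (\<lambda>v. D z * v) = (\<lambda>v. 0)"
  proof (rule Rolle_deriv[OF assms(1) eq cont])
    fix x assume "a < x" "x < b"
    hence "(\<phi> has_real_derivative D x) (at x)"
      using dphi[of x] at_within_Icc_at[of a x b] by auto
    thus "(\<phi> has_derivative (\<lambda>v. D x * v)) (at x)"
      by (simp add: has_field_derivative_def)
  qed
  then obtain z where z: "a < z" "z < b" "(\<lambda>v. D z * v) = (\<lambda>v. 0)" by blast
  hence "D z = 0" by (metis mult.right_neutral)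
  hence "(z - a) * f z = F z + C * (z - a)^2" unfolding D_def by simp
  hence "f z = F z / (z - a) + C * (z - a)"
    using z(1) by (simp add: field_simps power2_eq_square)
  hence "f z = int_mean f a z + C * (z - a)"
    unfolding int_mean_def F_def by simp
  thus ?thesis using z unfolding C_def by auto
qed

end
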